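(* Let $g(x)=\frac1\nu\int_{1-\nu}^1\Phi\big(\mu(x,u\,\mathcal{C}'/R)\big)\,du$ for $x\in[0,1]$. Then $g$ is differentiable (piecewise) with $$g'(x)=\frac{R}{\mathcal{C}'}\int_{z_x^{low}}^{z_x^{max}}\big(1+\delta_a+\delta_z\big)^2\phi(z)\,dz,$$ where $z_x^{low}=\mu(x,(1-\nu)\mathcal{C}'/R)$, $z_x^{max}=\mu(x,\mathcal{C}'/R)$, $\delta_a=a/\sqrt{2\log M}$ and $\delta_z=z/\sqrt{2\log M}$. Furthermore, if $$R=\frac{\mathcal{C}'}{(1+\delta_a)^2(1+r/\log M)}\quad\text{with } r\ge r_0:=\frac{1}{2(1+\delta_a)^2},$$ then $g(x)-x$ is a decreasing function of $x$ on $[0,1]$.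
   Context: Fix an integer $M\ge2$, $snr>0$, $\nu=snr/(1+snr)$, constants $a\ge0$, $\mathcal{C}'>0$, $R>0$. $\Phi,\phi$ denote the standard normal distribution function and density. For $x\in[0,1]$ and $u>0$, $\mu(x,u)=\big(\sqrt{u/(1-x\nu)}-1\big)\sqrt{2\log M}-a$ (natural logarithm). *)

theory Defs
  imports "HOL-Probability.Probability"
begin

abbreviation std_phi :: "real \<Rightarrow> real" where
  "std_phi \<equiv> std_normal_density"

definition std_Phi :: "real \<Rightarrow> real" where
  "std_Phi x = (LBINT t:{..x}. std_normal_density t)"

definition nu_of :: "real \<Rightarrow> real" where
  "nu_of snr = snr / (1 + snr)"

definition mu_fn :: "nat \<Rightarrow> real \<Rightarrow> real \<Rightarrow> real \<Rightarrow> real \<Rightarrow> real" where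
  "mu_fn M snr a x u = (sqrt (u / (1 - x * nu_of snr)) - 1) * sqrt (2 * ln (real M)) - a"

definition g_fn :: "nat \<Rightarrow> real \<Rightarrow> real \<Rightarrow> real \<Rightarrow> real \<Rightarrow> real \<Rightarrow> real" where
  "g_fn M snr a C' R x =
     (1 / nu_of snr) * integral {1 - nu_of snr..1} (\<lambda>u. std_Phi (mu_fn M snr a x (u * C' / R)))"

end

theory Submission
  imports Defs "HOL-Real_Asymp.Real_Asymp"
begin


abbreviation "NN \<equiv> density lborel std_normal_density"

lemma real_distr_NN: "real_distribution NN"
proof -
  interpret prob_space NN by (rule prob_space_normal_density) auto
  show ?thesis by unfold_locales simp
qed

lemma Phi_cdf: "std_Phi x = cdf NN x"
proof -
  have "cdf NN x = measure NN {..x}" by (simp add: cdf_def)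
  also have "\<dots> = integral\<^sup>L NN (indicator {..x})"
    by simp
  also have "\<dots> = integral\<^sup>L lborel (\<lambda>t. std_normal_density t *\<^sub>R indicator {..x} t)"
    by (rule integral_density) (auto simp: normal_density_nonneg)
  also have "\<dots> = std_Phi x"
    unfolding std_Phi_def set_lebesgue_integral_def by (simp add: mult.commute)
  finally show ?thesis ..
qed

lemma Phi_top: "(std_Phi \<longlongrightarrow> 1) at_top"
  using real_distribution.cdf_lim_at_top_prob[OF real_distr_NN] by (simp add: Phi_cdf[abs_def])

lemma Phi_bot: "(std_Phi \<longlongrightarrow> 0) at_bot"
  using finite_borel_measure.cdf_lim_at_bot[OF real_distribution.finite_borel_measure_M[OF real_distr_NN]]
  by (simp add: Phi_cdf[abs_def])

lemma integrable_phi: "integrable lborel std_normal_density"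
  using integrable_std_normal_moment[of 0] by simp

lemma Phi_split: "std_Phi x = std_Phi 0 + (LBINT y=0..x. std_normal_density y)"
proof -
  have si: "set_integrable lborel A std_normal_density" if "A \<in> sets lborel" for A
    using that integrable_phi unfolding set_integrable_def by (rule integrable_mult_indicator)
  have e: "std_Phi z = (LBINT y=-\<infinity>..ereal z. std_normal_density y)" for z
    unfolding std_Phi_def interval_lebesgue_integral_def einterval_def
    by (auto intro!: set_integral_discrete_difference[where X="{z}"])
  have "(LBINT y=-\<infinity>..ereal 0. std_normal_density y) + (LBINT y=ereal 0..ereal x. std_normal_density y)
      = (LBINT y=-\<infinity>..ereal x. std_normal_density y)"
    by (rule interval_integral_sum) (auto simp: interval_lebesgue_integrable_def si)
  then show ?thesis using e[of 0] e[of x] by (simp add: zero_ereal_def)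
qed

lemma Phi_deriv: "(std_Phi has_real_derivative std_normal_density x) (at x)"
proof -
  define a where "a = -\<bar>x\<bar> - 1"
  define b where "b = \<bar>x\<bar> + 1"
  have "((\<lambda>u. LBINT y=ereal 0..u. std_normal_density y) has_vector_derivative std_normal_density x) (at x within {a..b})"
    by (rule interval_integral_FTC2[of a 0 b]) (auto simp: a_def b_def std_normal_density_def intro!: continuous_intros)
  then have "((\<lambda>u. LBINT y=0..u. std_normal_density y) has_real_derivative std_normal_density x) (at x)"
    using at_within_Icc_at[of a x b] by (simp add: a_def b_def has_real_derivative_iff_has_vector_derivative zero_ereal_def)
  then have "((\<lambda>u. std_Phi 0 + (LBINT y=0..u. std_normal_density y)) has_real_derivative std_normal_density x) (at x)"
    by (auto intro!: derivative_eq_intros)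
  then show ?thesis by (subst (asm) Phi_split[symmetric]) simp
qed




lemma phi_deriv: "(std_phi has_real_derivative (- z * std_phi z)) (at z)"
proof -
  have s: "sqrt(2*pi) * sqrt(2*pi) = 2*pi" by simp
  have "((\<lambda>z. (1 / sqrt (2 * pi)) * exp (- z\<^sup>2 / 2)) has_real_derivative
        (1 / sqrt (2 * pi)) * (exp (- z\<^sup>2 / 2) * (- z))) (at z)"
    apply (auto intro!: derivative_eq_intros simp: power2_eq_square)
    using s by (simp add: field_simps)
  moreover have "(1 / sqrt (2 * pi)) * (exp (- z\<^sup>2 / 2) * (- z)) = - z * ((1 / sqrt (2 * pi)) * exp (- z\<^sup>2 / 2))"
    by (simp only: mult_ac)
  ultimately show ?thesis unfolding std_normal_density_def[abs_def] by (simp add: mult_ac)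
qed

lemma phi_deriv_eq: "D = - z * std_phi z \<Longrightarrow> (std_phi has_real_derivative D) (at z within s)"
  using phi_deriv has_field_derivative_at_within by blast

lemma Phi_deriv_eq: "D = std_phi z \<Longrightarrow> (std_Phi has_real_derivative D) (at z within s)"
  using Phi_deriv has_field_derivative_at_within by blast

definition FF :: "real \<Rightarrow> real \<Rightarrow> real \<Rightarrow> real" where
  "FF a L z = ((1+a/L)^2 + 1/L^2) * std_Phi z - (2*(1+a/L)/L * std_phi z + 1/L^2 * (z * std_phi z))"

lemma FF_deriv:
  assumes "L \<noteq> 0"
  shows "(FF a L has_real_derivative ((1 + a/L + z/L)^2 * std_phi z)) (at z)"
  unfolding FF_def[abs_def]
  using assms by (auto intro!: derivative_eq_intros Phi_deriv_eq phi_deriv_eq simp: field_simps power2_eq_square)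

lemma mu_u_deriv:
  assumes "t > 0" "c > 0" "u > 0"
  shows "((\<lambda>u. (sqrt (u * c / t) - 1) * L - a) has_real_derivative (L * (c / t) / (2 * sqrt (u * c / t)))) (at u)"
proof -
  have "u * c / t > 0" using assms by simp
  then show ?thesis
  using assms
  by (auto intro!: derivative_eq_intros simp: field_simps) (smt (verit) mult_pos_pos)
qed

lemma mu_x_deriv:
  assumes "x * nu < 1" "v > 0"
  shows "((\<lambda>x. (sqrt (v / (1 - x * nu)) - 1) * L - a) has_real_derivative
     (L * (v * nu / (1 - x * nu)^2) / (2 * sqrt (v / (1 - x * nu))))) (at x)"
  using assms
  by (auto intro!: derivative_eq_intros simp: field_simps power2_eq_square)




lemma FF_mono:
  assumes "L \<noteq> 0" "y \<le> z"
  shows "FF a L y \<le> FF a L z"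
proof (rule DERIV_nonneg_imp_increasing_open[OF assms(2)])
  fix x assume "y < x" "x < z"
  show "\<exists>d. (FF a L has_real_derivative d) (at x) \<and> 0 \<le> d"
    by (intro exI conjI, rule FF_deriv[OF assms(1)], simp add: normal_density_nonneg)
next
  show "continuous_on {y..z} (FF a L)"
    using FF_deriv[OF assms(1)] by (intro continuous_at_imp_continuous_on) (auto intro: DERIV_isCont)
qed

lemma FF_top:
  "(FF a L \<longlongrightarrow> ((1+a/L)^2 + 1/L^2) * 1 - 0) at_top"
proof -
  have e1: "(std_phi \<longlongrightarrow> 0) at_top" unfolding std_normal_density_def by real_asymp
  have e2: "((\<lambda>z. z * std_phi z) \<longlongrightarrow> 0) at_top" unfolding std_normal_density_def by real_asymp
  have "((\<lambda>z. 2*(1+a/L)/L * std_phi z + 1/L^2 * (z * std_phi z)) \<longlongrightarrow> 2*(1+a/L)/L * 0 + 1/L^2 * 0) at_top"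
    by (intro tendsto_intros e1 e2)
  then show ?thesis unfolding FF_def[abs_def] by (intro tendsto_intros Phi_top) simp
qed

lemma FF_bot:
  "(FF a L \<longlongrightarrow> ((1+a/L)^2 + 1/L^2) * 0 - 0) at_bot"
proof -
  have e1: "(std_phi \<longlongrightarrow> 0) at_bot" unfolding std_normal_density_def by real_asymp
  have e2: "((\<lambda>z. z * std_phi z) \<longlongrightarrow> 0) at_bot" unfolding std_normal_density_def by real_asymp
  have "((\<lambda>z. 2*(1+a/L)/L * std_phi z + 1/L^2 * (z * std_phi z)) \<longlongrightarrow> 2*(1+a/L)/L * 0 + 1/L^2 * 0) at_bot"
    by (intro tendsto_intros e1 e2)
  then show ?thesis unfolding FF_def[abs_def] by (intro tendsto_intros Phi_bot) simp
qed

lemma FF_upper: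
  assumes "L \<noteq> 0"
  shows "FF a L z \<le> (1+a/L)^2 + 1/L^2"
proof -
  have "FF a L z \<le> ((1+a/L)^2 + 1/L^2) * 1 - 0"
    by (rule tendsto_lowerbound[OF FF_top]) (auto simp: eventually_at_top_linorder intro!: exI[of _ z] FF_mono assms)
  then show ?thesis by simp
qed

lemma FF_lower:
  assumes "L \<noteq> 0"
  shows "0 \<le> FF a L z"
proof -
  have "((1+a/L)^2 + 1/L^2) * 0 - 0 \<le> FF a L z"
    by (rule tendsto_upperbound[OF FF_bot]) (auto simp: eventually_at_bot_linorder intro!: exI[of _ z] FF_mono assms)
  then show ?thesis by simp
qed

lemma FF_integral:
  assumes "L \<noteq> 0" "l \<le> m"
  shows "integral {l..m} (\<lambda>z. (1 + a/L + z/L)^2 * std_phi z) = FF a L m - FF a L l"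
proof (rule integral_unique, rule fundamental_theorem_of_calculus[OF assms(2)])
  fix x assume "x \<in> {l..m}"
  show "(FF a L has_vector_derivative (1 + a/L + x/L)^2 * std_phi x) (at x within {l..m})"
    using FF_deriv[OF assms(1)] by (simp add: has_real_derivative_iff_has_vector_derivative[symmetric] has_field_derivative_at_within)
qed




context
  fixes M :: nat and snr a C' R :: real
  assumes M2: "M \<ge> 2" and snr: "snr > 0" and C: "C' > 0" and R: "R > 0"
begin

lemma L_pos: "sqrt (2 * ln (real M)) > 0"
proof -
  have "real M > 1" using M2 by simp
  then have "ln (real M) > 0" by simp
  then show ?thesis by simp
qed

lemma nu_pos: "nu_of snr > 0" and nu_lt1: "nu_of snr < 1"
  using snr by (auto simp: nu_of_def)

definition "HH x u = u * std_Phi (mu_fn M snr a x (u * C' / R))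
   - ((1 - x * nu_of snr) * R / C') * FF a (sqrt (2 * ln (real M))) (mu_fn M snr a x (u * C' / R))"

lemma w_id:
  assumes "x * nu_of snr < 1" "v \<ge> 0"
  shows "(1 + a / sqrt (2 * ln (real M)) + mu_fn M snr a x v / sqrt (2 * ln (real M)))^2 = v / (1 - x * nu_of snr)"
proof -
  have "1 + a / sqrt (2 * ln (real M)) + mu_fn M snr a x v / sqrt (2 * ln (real M)) = sqrt (v / (1 - x * nu_of snr))"
    using L_pos by (simp add: mu_fn_def field_simps)
  then show ?thesis using assms by simp
qed

lemma HH_u_deriv:
  assumes x: "x * nu_of snr < 1" and u: "u > 0"
  shows "(HH x has_real_derivative std_Phi (mu_fn M snr a x (u * C' / R))) (at u)"
proof -
  define L where "L = sqrt (2 * ln (real M))"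
  define t where "t = 1 - x * nu_of snr"
  define m where "m = (\<lambda>u. mu_fn M snr a x (u * C' / R))"
  have t: "t > 0" using x by (simp add: t_def)
  have L: "L > 0" using L_pos by (simp add: L_def)
  have meq: "m = (\<lambda>u. (sqrt (u * (C'/R) / t) - 1) * L - a)"
    by (auto simp: m_def mu_fn_def t_def L_def)
  define D where "D = L * ((C'/R) / t) / (2 * sqrt (u * (C'/R) / t))"
  have dm: "(m has_real_derivative D) (at u)"
    unfolding meq D_def by (rule mu_u_deriv) (use t C R u in auto)
  have d1: "((\<lambda>u. std_Phi (m u)) has_real_derivative std_phi (m u) * D) (at u)"
    by (rule DERIV_chain2[OF Phi_deriv dm])
  have d2: "((\<lambda>u. FF a L (m u)) has_real_derivative (1 + a/L + m u/L)^2 * std_phi (m u) * D) (at u)"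
    by (rule DERIV_chain2[OF FF_deriv dm]) (use L in simp)
  have w: "(1 + a/L + m u/L)^2 = u * C' / R / t"
    unfolding L_def m_def t_def by (rule w_id[OF x]) (use u C R in simp)
  have "((\<lambda>u. u * std_Phi (m u) - (t * R / C') * FF a L (m u)) has_real_derivative std_Phi (m u)) (at u)"
    apply (rule DERIV_cong[OF DERIV_diff[OF DERIV_mult[OF DERIV_ident d1] DERIV_cmult[OF d2]]])
    unfolding w using t C R by (simp add: field_simps)
  then show ?thesis unfolding HH_def[abs_def] m_def t_def L_def .
qed

lemma HH_x_deriv:
  assumes x: "x * nu_of snr < 1" and u: "u > 0"
  shows "((\<lambda>x. HH x u) has_real_derivative (nu_of snr * R / C') * FF a (sqrt (2 * ln (real M))) (mu_fn M snr a x (u * C' / R))) (at x)"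
proof -
  define L where "L = sqrt (2 * ln (real M))"
  define nu where "nu = nu_of snr"
  define v where "v = u * C' / R"
  define m where "m = (\<lambda>x. mu_fn M snr a x v)"
  have v: "v > 0" using u C R by (simp add: v_def)
  have L: "L > 0" using L_pos by (simp add: L_def)
  have x': "x * nu < 1" using x by (simp add: nu_def)
  have meq: "m = (\<lambda>x. (sqrt (v / (1 - x * nu)) - 1) * L - a)"
    by (auto simp: m_def mu_fn_def nu_def L_def)
  define D where "D = L * (v * nu / (1 - x * nu)^2) / (2 * sqrt (v / (1 - x * nu)))"
  have dm: "(m has_real_derivative D) (at x)"
    unfolding meq D_def by (rule mu_x_deriv[OF x' v])
  have d1: "((\<lambda>x. std_Phi (m x)) has_real_derivative std_phi (m x) * D) (at x)"
    by (rule DERIV_chain2[OF Phi_deriv dm])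
  have d2: "((\<lambda>x. FF a L (m x)) has_real_derivative (1 + a/L + m x/L)^2 * std_phi (m x) * D) (at x)"
    by (rule DERIV_chain2[OF FF_deriv dm]) (use L in simp)
  have w: "(1 + a/L + m x/L)^2 = v / (1 - x * nu)"
    unfolding L_def m_def nu_def by (rule w_id[OF x]) (use v in simp)
  have k: "((\<lambda>x. (1 - x * nu) * R / C') has_real_derivative (- nu * R / C')) (at x)"
    using C by (auto intro!: derivative_eq_intros)
  have "((\<lambda>x. u * std_Phi (m x) - ((1 - x * nu) * R / C') * FF a L (m x)) has_real_derivative (nu * R / C') * FF a L (m x)) (at x)"
    apply (rule DERIV_cong[OF DERIV_diff[OF DERIV_cmult[OF d1] DERIV_mult[OF k d2]]])
    unfolding w using x' C R v by (simp add: field_simps v_def)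
  then show ?thesis unfolding HH_def[abs_def] m_def nu_def L_def v_def .
qed

lemma g_eq:
  assumes x: "x * nu_of snr < 1"
  shows "g_fn M snr a C' R x = (1 / nu_of snr) * (HH x 1 - HH x (1 - nu_of snr))"
proof -
  have "((\<lambda>u. std_Phi (mu_fn M snr a x (u * C' / R))) has_integral (HH x 1 - HH x (1 - nu_of snr))) {1 - nu_of snr..1}"
  proof (rule fundamental_theorem_of_calculus)
    show "1 - nu_of snr \<le> 1" using nu_pos by simp
    fix u assume "u \<in> {1 - nu_of snr..1}"
    then have "u > 0" using nu_lt1 by auto
    then show "(HH x has_vector_derivative std_Phi (mu_fn M snr a x (u * C' / R))) (at u within {1 - nu_of snr..1})"
      using HH_u_deriv[OF x] by (simp add: has_real_derivative_iff_has_vector_derivative[symmetric] has_field_derivative_at_within)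
  qed
  then show ?thesis unfolding g_fn_def by (simp add: integral_unique)
qed

lemma g_deriv:
  assumes x: "x * nu_of snr < 1"
  shows "(g_fn M snr a C' R has_real_derivative
     (R / C') * (FF a (sqrt (2 * ln (real M))) (mu_fn M snr a x (C' / R))
                - FF a (sqrt (2 * ln (real M))) (mu_fn M snr a x ((1 - nu_of snr) * C' / R)))) (at x)"
proof -
  have p: "(1:: real) > 0" "1 - nu_of snr > 0" using nu_lt1 by auto
  have "((\<lambda>x. (1 / nu_of snr) * (HH x 1 - HH x (1 - nu_of snr))) has_real_derivative
     (1 / nu_of snr) * ((nu_of snr * R / C') * FF a (sqrt (2 * ln (real M))) (mu_fn M snr a x (1 * C' / R))
       - (nu_of snr * R / C') * FF a (sqrt (2 * ln (real M))) (mu_fn M snr a x ((1 - nu_of snr) * C' / R)))) (at x)"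
    by (intro DERIV_cmult DERIV_diff HH_x_deriv[OF x] p)
  also have "(1 / nu_of snr) * ((nu_of snr * R / C') * FF a (sqrt (2 * ln (real M))) (mu_fn M snr a x (1 * C' / R))
       - (nu_of snr * R / C') * FF a (sqrt (2 * ln (real M))) (mu_fn M snr a x ((1 - nu_of snr) * C' / R)))
     = (R / C') * (FF a (sqrt (2 * ln (real M))) (mu_fn M snr a x (C' / R))
                - FF a (sqrt (2 * ln (real M))) (mu_fn M snr a x ((1 - nu_of snr) * C' / R)))"
    using nu_pos C by (simp add: field_simps)
  finally have d: "((\<lambda>x. (1 / nu_of snr) * (HH x 1 - HH x (1 - nu_of snr))) has_real_derivative
     (R / C') * (FF a (sqrt (2 * ln (real M))) (mu_fn M snr a x (C' / R))
                - FF a (sqrt (2 * ln (real M))) (mu_fn M snr a x ((1 - nu_of snr) * C' / R)))) (at x)" .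
  have mem: "y \<in> {..<1 / nu_of snr} \<longleftrightarrow> y * nu_of snr < 1" for y
    using nu_pos by (simp add: field_simps)
  show ?thesis
    by (rule has_field_derivative_transform_within_open[OF d, of "{..<1 / nu_of snr}"])
       (use mem x g_eq in \<open>auto simp del: lessThan_iff\<close>)
qed

lemma zl_le_zm:
  assumes x: "x * nu_of snr < 1"
  shows "mu_fn M snr a x ((1 - nu_of snr) * C' / R) \<le> mu_fn M snr a x (C' / R)"
proof -
  have "(1 - nu_of snr) * C' / R / (1 - x * nu_of snr) \<le> C' / R / (1 - x * nu_of snr)"
    using nu_pos x C R by (intro divide_right_mono) (auto simp: field_simps)
  then have "sqrt ((1 - nu_of snr) * C' / R / (1 - x * nu_of snr)) \<le> sqrt (C' / R / (1 - x * nu_of snr))"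
    by simp
  then show ?thesis unfolding mu_fn_def using L_pos by (intro diff_right_mono mult_right_mono) auto
qed

end



theorem lemma6:
  fixes M :: nat and snr a C' R :: real
  assumes "M \<ge> 2" and "snr > 0" and "a \<ge> 0" and "C' > 0" and "R > 0"
  shows
    "(\<forall>x\<in>{0..1}.
        (g_fn M snr a C' R has_real_derivative
          (R / C') * integral {mu_fn M snr a x ((1 - nu_of snr) * C' / R) .. mu_fn M snr a x (C' / R)}
             (\<lambda>z. (1 + a / sqrt (2 * ln (real M)) + z / sqrt (2 * ln (real M)))\<^sup>2 * std_phi z))
        (at x within {0..1}))
     \<and> (\<forall>r::real. r \<ge> 1 / (2 * (1 + a / sqrt (2 * ln (real M)))\<^sup>2) \<longrightarrow>
          R = C' / ((1 + a / sqrt (2 * ln (real M)))\<^sup>2 * (1 + r / ln (real M))) \<longrightarrow>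
          antimono_on {0..1} (\<lambda>x. g_fn M snr a C' R x - x))"
proof -
  note A = assms(1,2,4,5)
  define L where "L = sqrt (2 * ln (real M))"
  have L: "L > 0" using L_pos[OF A] by (simp add: L_def)
  have nu: "0 < nu_of snr" "nu_of snr < 1" using nu_pos[OF A] nu_lt1[OF A] by auto
  have xnu: "x * nu_of snr < 1" if "x \<in> {0..1}" for x
  proof -
    have "x * nu_of snr \<le> 1 * nu_of snr" using that nu by (intro mult_right_mono) auto
    then show ?thesis using nu by linarith
  qed
  have gd: "(g_fn M snr a C' R has_real_derivative
          (R / C') * integral {mu_fn M snr a x ((1 - nu_of snr) * C' / R) .. mu_fn M snr a x (C' / R)}
             (\<lambda>z. (1 + a / L + z / L)\<^sup>2 * std_phi z)) (at x)"
       "integral {mu_fn M snr a x ((1 - nu_of snr) * C' / R) .. mu_fn M snr a x (C' / R)}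
             (\<lambda>z. (1 + a / L + z / L)\<^sup>2 * std_phi z) =
          FF a L (mu_fn M snr a x (C' / R)) - FF a L (mu_fn M snr a x ((1 - nu_of snr) * C' / R))"
    if "x \<in> {0..1}" for x
  proof -
    show *: "integral {mu_fn M snr a x ((1 - nu_of snr) * C' / R) .. mu_fn M snr a x (C' / R)}
             (\<lambda>z. (1 + a / L + z / L)\<^sup>2 * std_phi z) =
          FF a L (mu_fn M snr a x (C' / R)) - FF a L (mu_fn M snr a x ((1 - nu_of snr) * C' / R))"
      using L by (intro FF_integral zl_le_zm[OF A xnu[OF that]]) auto
    show "(g_fn M snr a C' R has_real_derivative
          (R / C') * integral {mu_fn M snr a x ((1 - nu_of snr) * C' / R) .. mu_fn M snr a x (C' / R)}
             (\<lambda>z. (1 + a / L + z / L)\<^sup>2 * std_phi z)) (at x)"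
      unfolding * using g_deriv[OF A xnu[OF that]] by (simp add: L_def)
  qed
  have part1: "\<forall>x\<in>{0..1}.
        (g_fn M snr a C' R has_real_derivative
          (R / C') * integral {mu_fn M snr a x ((1 - nu_of snr) * C' / R) .. mu_fn M snr a x (C' / R)}
             (\<lambda>z. (1 + a / L + z / L)\<^sup>2 * std_phi z))
        (at x within {0..1})"
    using gd(1) has_field_derivative_at_within by blast
  have part2: "antimono_on {0..1} (\<lambda>x. g_fn M snr a C' R x - x)"
    if r: "r \<ge> 1 / (2 * (1 + a / L)\<^sup>2)" and Req: "R = C' / ((1 + a / L)\<^sup>2 * (1 + r / ln (real M)))" for r
  proof (rule monotone_onI)
    have lnM: "ln (real M) > 0" using assms(1) by simp
    have L2: "L^2 = 2 * ln (real M)" using lnM by (simp add: L_def)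
    have al: "1 + a / L \<ge> 1" using L assms(3) by simp
    then have al2: "(1 + a / L)^2 > 0" by simp
    have "(1 + a / L)^2 * r \<ge> 1/2"
      using r al2 by (simp add: field_simps)
    then have key: "(1 + a/L)^2 + 1/L^2 \<le> (1 + a / L)^2 * (1 + r / ln (real M))"
      using lnM unfolding L2 by (simp add: field_simps)
    have pos: "(1 + a / L)^2 * (1 + r / ln (real M)) > 0"
    proof -
      have "0 < (1 + a/L)^2 + 1/L^2" using al2 L by (simp add: add_pos_pos)
      then show ?thesis using key by linarith
    qed
    have RC: "R / C' = 1 / ((1 + a / L)^2 * (1 + r / ln (real M)))"
    proof -
      have "C' / X / C' = 1 / X" if "X > 0" for X using assms(4) that by (simp add: field_simps)
      then show ?thesis unfolding Req using pos by blast
    qed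
    have bound: "(R / C') * (FF a L z1 - FF a L z2) - 1 \<le> 0" for z1 z2
    proof -
      have "FF a L z1 - FF a L z2 \<le> (1 + a/L)^2 + 1/L^2"
        using FF_upper[of L a z1] FF_lower[of L a z2] L by simp
      also have "\<dots> \<le> (1 + a / L)^2 * (1 + r / ln (real M))" by (rule key)
      finally show ?thesis unfolding RC using pos by (simp add: field_simps)
    qed
    fix x y :: real assume xy: "x \<in> {0..1}" "y \<in> {0..1}" "x \<le> y"
    have d: "((\<lambda>x. g_fn M snr a C' R x - x) has_real_derivative
         (R / C') * (FF a L (mu_fn M snr a z (C' / R)) - FF a L (mu_fn M snr a z ((1 - nu_of snr) * C' / R))) - 1) (at z)"
      if "z \<in> {0..1}" for z
      using gd[OF that] by (auto intro!: derivative_eq_intros)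
    show "g_fn M snr a C' R y - y \<le> g_fn M snr a C' R x - x"
    proof (rule DERIV_nonpos_imp_decreasing_open[OF xy(3)])
      fix z assume "x < z" "z < y"
      then have "z \<in> {0..1}" using xy by auto
      then show "\<exists>d. ((\<lambda>x. g_fn M snr a C' R x - x) has_real_derivative d) (at z) \<and> d \<le> 0"
        using d bound by blast
    next
      show "continuous_on {x..y} (\<lambda>x. g_fn M snr a C' R x - x)"
      proof (intro continuous_at_imp_continuous_on ballI)
        fix z assume "z \<in> {x..y}"
        then have "z \<in> {0..1}" using xy by auto
        from DERIV_isCont[OF d[OF this]] show "isCont (\<lambda>x. g_fn M snr a C' R x - x) z" .
      qed
    qed
  qed
  show ?thesis using part1 part2 unfolding L_def by blast
qed


end
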